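(* For each of the following finite posets $\mathcal{P}$ one has $b(\mathfrak{g}^{\prec}(\mathcal{P}))=|Rel_{\overline{C}}(\mathcal{P})|$: (a) $\mathcal{P}=\mathbf{2\times n}$ for $n\ge 1$; (b) $\mathcal{P}=T_m(n)$ for $m\ge 2$, $n\ge 1$.
   Context: All Lie algebras are over an algebraically closed field $\mathbf{k}$ of characteristic zero. For a finite poset $\mathcal{P}$, write $x\prec y$ for strict relations; a strict relation $p\prec q$ is covering if there is no $z$ with $p\prec z\prec q$, and $Rel_{\overline{C}}(\mathcal{P})$ is the set of non-covering strict relations. $\mathfrak{g}^{\prec}(\mathcal{P})$ is the Lie algebra (commutator bracket) of matrices spanned by matrix units $E_{p,q}$ with $p\prec q$. The breadth is $b(L)=\max_{x\in L}\operatorname{rank}(\mathrm{ad}_x)$. $\mathbf{2\times n}$ is the poset on $\{i_j : 1\le i\le n,\ 1\le j\le 2\}$ with $i_j\preceq i'_{j'}$ iff $i\le i'$ and $j\le j'$. $T_m(n)$ is the rooted complete $m$-ary tree of depth $n$: the poset on $\{i_k : 1\le k\le n,\ 1\le i\le m^{k-1}\}$ whose covering relations are $i_k\prec j_{k+1}$ for $1\le k<n$, $1\le i\le m^{k-1}$, $m(i-1)+1\le j\le mi$, with the order the transitive closure of these. *)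

theory Defs
  imports "HOL-Computational_Algebra.Computational_Algebra" "HOL-Library.Function_Algebras"
begin

definition rel_noncov :: "'a set \<Rightarrow> ('a \<Rightarrow> 'a \<Rightarrow> bool) \<Rightarrow> ('a \<times> 'a) set" where
  "rel_noncov P lt = {(p, q). p \<in> P \<and> q \<in> P \<and> lt p q \<and> (\<exists>z\<in>P. lt p z \<and> lt z q)}"

text \<open>Matrices indexed by P x P with entries in k; g^prec(P) is the span of the
  matrix units E_{p,q} with p strictly below q, i.e. the matrices supported on
  strict relations.\<close>
definition gprec :: "'a set \<Rightarrow> ('a \<Rightarrow> 'a \<Rightarrow> bool) \<Rightarrow> ('a \<times> 'a \<Rightarrow> 'k::field) set" where
  "gprec P lt = {x. \<forall>a b. x (a, b) \<noteq> 0 \<longrightarrow> a \<in> P \<and> b \<in> P \<and> lt a b}"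

definition matmul :: "'a set \<Rightarrow> ('a \<times> 'a \<Rightarrow> 'k::field) \<Rightarrow> ('a \<times> 'a \<Rightarrow> 'k) \<Rightarrow> ('a \<times> 'a \<Rightarrow> 'k)" where
  "matmul P x y = (\<lambda>(a, c). \<Sum>b\<in>P. x (a, b) * y (b, c))"

definition lie_bracket :: "'a set \<Rightarrow> ('a \<times> 'a \<Rightarrow> 'k::field) \<Rightarrow> ('a \<times> 'a \<Rightarrow> 'k) \<Rightarrow> ('a \<times> 'a \<Rightarrow> 'k)" where
  "lie_bracket P x y = (\<lambda>ij. matmul P x y ij - matmul P y x ij)"

definition mscale :: "'k::field \<Rightarrow> ('a \<times> 'a \<Rightarrow> 'k) \<Rightarrow> ('a \<times> 'a \<Rightarrow> 'k)" where
  "mscale c f = (\<lambda>ij. c * f ij)"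

definition ad_rank :: "'a set \<Rightarrow> ('a \<Rightarrow> 'a \<Rightarrow> bool) \<Rightarrow> ('a \<times> 'a \<Rightarrow> 'k::field) \<Rightarrow> nat" where
  "ad_rank P lt x = vector_space.dim mscale (lie_bracket P x ` gprec P lt)"

definition breadth :: "'a set \<Rightarrow> ('a \<Rightarrow> 'a \<Rightarrow> bool) \<Rightarrow> 'k::field itself \<Rightarrow> nat" where
  "breadth P lt (_::'k itself) = Max (ad_rank P lt ` (gprec P lt :: ('a \<times> 'a \<Rightarrow> 'k) set))"

text \<open>Element i_j of 2 x n is the pair (i, j).\<close>
definition two_by_n :: "nat \<Rightarrow> (nat \<times> nat) set" where
  "two_by_n n = {(i, j). 1 \<le> i \<and> i \<le> n \<and> 1 \<le> j \<and> j \<le> 2}"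

definition two_by_n_lt :: "nat \<times> nat \<Rightarrow> nat \<times> nat \<Rightarrow> bool" where
  "two_by_n_lt x y = (fst x \<le> fst y \<and> snd x \<le> snd y \<and> x \<noteq> y)"

text \<open>Element i_k of T_m(n) is the pair (i, k).\<close>
definition tree_poset :: "nat \<Rightarrow> nat \<Rightarrow> (nat \<times> nat) set" where
  "tree_poset m n = {(i, k). 1 \<le> k \<and> k \<le> n \<and> 1 \<le> i \<and> i \<le> m ^ (k - 1)}"

definition tree_cover :: "nat \<Rightarrow> nat \<Rightarrow> ((nat \<times> nat) \<times> (nat \<times> nat)) set" where
  "tree_cover m n = {((i, k), (j, l)). 1 \<le> k \<and> k < n \<and> 1 \<le> i \<and> i \<le> m ^ (k - 1)
       \<and> l = k + 1 \<and> m * (i - 1) + 1 \<le> j \<and> j \<le> m * i}"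

definition tree_lt :: "nat \<Rightarrow> nat \<Rightarrow> nat \<times> nat \<Rightarrow> nat \<times> nat \<Rightarrow> bool" where
  "tree_lt m n x y = ((x, y) \<in> (tree_cover m n)\<^sup>+)"

end

theory Submission
  imports Defs
begin

interpretation V: vector_space "mscale :: 'k::field \<Rightarrow> ('a \<times> 'a \<Rightarrow> 'k) \<Rightarrow> ('a \<times> 'a \<Rightarrow> 'k)"
  by unfold_locales (simp_all add: mscale_def fun_eq_iff algebra_simps)

definition Eu :: "'a \<times> 'a \<Rightarrow> ('a \<times> 'a \<Rightarrow> 'k::field)" where
  "Eu r = (\<lambda>ij. if ij = r then 1 else 0)"

lemma sum_fun_apply: "(\<Sum>s\<in>S. g s) ij = (\<Sum>s\<in>S. g s ij)"
  by (induction S rule: infinite_finite_induct) auto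

lemma span_support:
  fixes f :: "'a \<times> 'a \<Rightarrow> 'k::field"
  assumes "finite S" "\<And>ij. f ij \<noteq> 0 \<Longrightarrow> ij \<in> S"
  shows "f \<in> V.span (Eu ` S)"
proof -
  have "f = (\<Sum>s\<in>S. mscale (f s) (Eu s))"
  proof
    fix ij
    show "f ij = (\<Sum>s\<in>S. mscale (f s) (Eu s)) ij"
      unfolding sum_fun_apply mscale_def Eu_def
    proof -
      have "(\<Sum>s\<in>S. f s * (if ij = s then 1 else 0)) = (\<Sum>s\<in>S. if ij = s then f s else 0)"
        by (rule sum.cong) auto
      also have "\<dots> = f ij" using assms by (cases ij) (auto simp: sum.delta)
      finally show "f ij = (\<Sum>s\<in>S. f s * (if ij = s then 1 else 0))" by simp
    qed
  qed
  also have "\<dots> \<in> V.span (Eu ` S)"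
    by (intro V.span_sum V.span_scale V.span_base) auto
  finally show ?thesis .
qed

lemma Eu_inj: "inj (Eu :: _ \<Rightarrow> ('a \<times> 'a \<Rightarrow> 'k::field))"
  by (auto simp: inj_def Eu_def fun_eq_iff split: if_splits)

lemma Eu_indep: "V.independent (Eu ` S :: ('a \<times> 'a \<Rightarrow> 'k::field) set)"
proof
  assume "V.dependent (Eu ` S :: ('a \<times> 'a \<Rightarrow> 'k) set)"
  then obtain t u where t: "finite t" "t \<subseteq> Eu ` S" "(\<Sum>v\<in>t. mscale (u v) v) = (0::'a \<times> 'a \<Rightarrow> 'k)"
      "\<exists>v\<in>t. u v \<noteq> 0"
    unfolding V.dependent_explicit by blast
  obtain v where v: "v \<in> t" "u v \<noteq> 0" using t(4) by blast
  then obtain r where r: "v = Eu r" using t(2) by blast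
  have "0 = (\<Sum>v\<in>t. mscale (u v) v) r" using t(3) by simp
  also have "\<dots> = (\<Sum>w\<in>t. if w = v then u w else 0)"
    unfolding sum_fun_apply
  proof (rule sum.cong)
    fix w assume "w \<in> t"
    then obtain r' where w: "w = Eu r'" using t(2) by blast
    have "w = v \<longleftrightarrow> r' = r" using w r Eu_inj[THEN injD] by blast
    then show "mscale (u w) w r = (if w = v then u w else 0)"
      using w by (auto simp: mscale_def Eu_def)
  qed simp
  also have "\<dots> = u v" using v t(1) by (simp add: sum.delta')
  finally show False using v by simp
qed

definition transp_on' :: "('a \<Rightarrow> 'a \<Rightarrow> bool) \<Rightarrow> bool" where
  "transp_on' lt = (\<forall>a b c. lt a b \<longrightarrow> lt b c \<longrightarrow> lt a c)"

lemma bracket_support: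
  fixes x y :: "'a \<times> 'a \<Rightarrow> 'k::field"
  assumes x: "x \<in> gprec P lt" and y: "y \<in> gprec P lt" and tr: "transp_on' lt"
    and nz: "lie_bracket P x y (a, c) \<noteq> 0"
  shows "(a, c) \<in> rel_noncov P lt"
proof -
  have "matmul P x y (a, c) \<noteq> 0 \<or> matmul P y x (a, c) \<noteq> 0"
    using nz by (auto simp: lie_bracket_def)
  then obtain b where b: "b \<in> P" "(x (a, b) \<noteq> 0 \<and> y (b, c) \<noteq> 0) \<or> (y (a, b) \<noteq> 0 \<and> x (b, c) \<noteq> 0)"
  proof
    assume "matmul P x y (a, c) \<noteq> 0"
    then have "(\<Sum>b\<in>P. x (a, b) * y (b, c)) \<noteq> 0" by (simp add: matmul_def)
    then obtain b where "b \<in> P" "x (a, b) * y (b, c) \<noteq> 0"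
      by (rule sum.not_neutral_contains_not_neutral)
    then show thesis using that by auto
  next
    assume "matmul P y x (a, c) \<noteq> 0"
    then have "(\<Sum>b\<in>P. y (a, b) * x (b, c)) \<noteq> 0" by (simp add: matmul_def)
    then obtain b where "b \<in> P" "y (a, b) * x (b, c) \<noteq> 0"
      by (rule sum.not_neutral_contains_not_neutral)
    then show thesis using that by auto
  qed
  then have "a \<in> P \<and> c \<in> P \<and> lt a b \<and> lt b c"
    using x y by (auto simp: gprec_def)
  then show ?thesis using b tr unfolding rel_noncov_def transp_on'_def by blast
qed

lemma finite_noncov: "finite P \<Longrightarrow> finite (rel_noncov P lt)"
  by (rule finite_subset[of _ "P \<times> P"]) (auto simp: rel_noncov_def)

lemma image_sub:
  fixes x :: "'a \<times> 'a \<Rightarrow> 'k::field"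
  assumes P: "finite P" and tr: "transp_on' lt" and x: "x \<in> gprec P lt"
  shows "lie_bracket P x ` gprec P lt \<subseteq> V.span (Eu ` rel_noncov P lt)"
  proof
    fix z assume "z \<in> lie_bracket P x ` gprec P lt"
    then obtain y where y: "y \<in> gprec P lt" "z = lie_bracket P x y" by blast
    show "z \<in> V.span (Eu ` rel_noncov P lt)"
      using span_support[OF finite_noncov[OF P], of z] bracket_support[OF x y(1) tr] y(2)
      by (metis surj_pair)
  qed

lemma ad_rank_le:
  fixes x :: "'a \<times> 'a \<Rightarrow> 'k::field"
  assumes P: "finite P" and tr: "transp_on' lt" and x: "x \<in> gprec P lt"
  shows "ad_rank P lt x \<le> card (rel_noncov P lt)"
proof -
  note image_sub[OF P tr x]
  then have "ad_rank P lt x \<le> card (Eu ` rel_noncov P lt :: ('a \<times> 'a \<Rightarrow> 'k) set)"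
    unfolding ad_rank_def by (intro V.dim_le_card) (auto intro: finite_noncov P)
  also have "\<dots> \<le> card (rel_noncov P lt)" by (rule card_image_le) (rule finite_noncov[OF P])
  finally show ?thesis .
qed

lemma ad_rank_ge:
  fixes x :: "'a \<times> 'a \<Rightarrow> 'k::field"
  assumes P: "finite P" and tr: "transp_on' lt" and x: "x \<in> gprec P lt"
  and h: "\<And>r. r \<in> rel_noncov P lt \<Longrightarrow> Eu r \<in> V.span (lie_bracket P x ` gprec P lt)"
  shows "card (rel_noncov P lt) \<le> ad_rank P lt x"
proof -
  let ?V = "V.span (lie_bracket P x ` gprec P lt)"
  obtain B where B: "B \<subseteq> ?V" "V.independent B" "?V \<subseteq> V.span B" "card B = V.dim ?V"
    by (rule V.basis_exists)
  have "?V \<subseteq> V.span (Eu ` rel_noncov P lt)"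
    using image_sub[OF P tr x] by (metis V.span_minimal V.subspace_span)
  then have fB: "finite B" using B(1,2) V.independent_span_bound[of "Eu ` rel_noncov P lt" B]
    finite_noncov[OF P] by blast
  have "card (rel_noncov P lt) = card (Eu ` rel_noncov P lt :: ('a \<times> 'a \<Rightarrow> 'k) set)"
    by (rule card_image[symmetric]) (rule inj_on_subset[OF Eu_inj], simp)
  also have "\<dots> \<le> card B"
    using V.independent_span_bound[OF fB Eu_indep] h B(3) by blast
  also have "\<dots> = V.dim ?V" by (rule B(4))
  also have "\<dots> = ad_rank P lt x" by (simp add: ad_rank_def)
  finally show ?thesis .
qed

lemma breadth_eq:
  fixes x0 :: "'a \<times> 'a \<Rightarrow> 'k::field"
  assumes P: "finite P" and tr: "transp_on' lt" and x0: "x0 \<in> gprec P lt"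
    and h: "\<And>r. r \<in> rel_noncov P lt \<Longrightarrow> Eu r \<in> V.span (lie_bracket P x0 ` gprec P lt)"
  shows "breadth P lt TYPE('k) = card (rel_noncov P lt)"
proof -
  let ?A = "ad_rank P lt ` (gprec P lt :: ('a \<times> 'a \<Rightarrow> 'k) set)"
  have le: "\<And>n. n \<in> ?A \<Longrightarrow> n \<le> card (rel_noncov P lt)"
    using ad_rank_le[OF P tr] by blast
  have fin: "finite ?A" by (rule finite_subset[of _ "{..card (rel_noncov P lt)}"]) (use le in auto)
  have "ad_rank P lt x0 = card (rel_noncov P lt)"
    using ad_rank_le[OF P tr x0] ad_rank_ge[OF P tr x0 h] by simp
  then have mem: "card (rel_noncov P lt) \<in> ?A" using x0 by force
  show ?thesis unfolding breadth_def by (rule Max_eqI[OF fin le mem])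
qed

definition indX :: "('a \<times> 'a) set \<Rightarrow> ('a \<times> 'a \<Rightarrow> 'k::field)" where
  "indX X = (\<lambda>r. if r \<in> X then 1 else 0)"

lemma bracket_X:
  fixes X :: "('a \<times> 'a) set" and Y :: "'a \<times> 'a \<Rightarrow> 'k::field"
  defines "Y \<equiv> indX X"
  assumes P: "finite P" and XP: "X \<subseteq> P \<times> P"
    and uniq: "\<And>a a' b. (a, b) \<in> X \<Longrightarrow> (a', b) \<in> X \<Longrightarrow> a = a'"
    and pb: "(p, b) \<in> X" and q: "q \<in> P"
  shows "lie_bracket P Y (Eu (b, q)) = Eu (p, q) - (\<Sum>d\<in>{d. (q, d) \<in> X}. Eu (b, d))"
proof (rule ext)
  fix ac :: "'a \<times> 'a"
  obtain a c where ac: "ac = (a, c)" by (metis surj_pair)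
  have bP: "b \<in> P" using XP pb by auto
  have fD: "finite {d. (q, d) \<in> X}"
    by (rule finite_subset[OF _ P]) (use XP in blast)
  have m1: "matmul P Y (Eu (b, q)) (a, c) = Eu (p, q) (a, c)"
  proof -
    have "matmul P Y (Eu (b, q)) (a, c) = (\<Sum>b'\<in>P. if b' = b then (if c = q \<and> (a, b) \<in> X then 1 else 0) else 0)"
      unfolding matmul_def prod.case by (rule sum.cong) (auto simp: Y_def indX_def Eu_def)
    also have "\<dots> = (if c = q \<and> (a, b) \<in> X then 1 else 0)" using bP P by (simp add: sum.delta')
    also have "\<dots> = Eu (p, q) (a, c)"
    proof -
      have aX: "(a, b) \<in> X \<longleftrightarrow> a = p" using uniq[OF pb] pb by blast
      show ?thesis by (simp add: Eu_def aX)
    qed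
    finally show ?thesis .
  qed
  have m2: "matmul P (Eu (b, q)) Y (a, c) = (\<Sum>d\<in>{d. (q, d) \<in> X}. Eu (b, d)) (a, c)"
  proof -
    have "matmul P (Eu (b, q)) Y (a, c) = (\<Sum>b'\<in>P. if b' = q then (if a = b \<and> (q, c) \<in> X then 1 else 0) else 0)"
      unfolding matmul_def prod.case by (rule sum.cong) (auto simp: Y_def indX_def Eu_def)
    also have "\<dots> = (if a = b \<and> (q, c) \<in> X then 1 else 0)" using q P by (simp add: sum.delta')
    also have "\<dots> = (\<Sum>d\<in>{d. (q, d) \<in> X}. if d = c then (if a = b then 1 else 0) else 0)"
      using fD by (simp add: sum.delta')
    also have "\<dots> = (\<Sum>d\<in>{d. (q, d) \<in> X}. Eu (b, d)) (a, c)"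
      unfolding sum_fun_apply by (rule sum.cong) (auto simp: Eu_def)
    finally show ?thesis .
  qed
  show "lie_bracket P Y (Eu (b, q)) ac = (Eu (p, q) - (\<Sum>d\<in>{d. (q, d) \<in> X}. Eu (b, d))) ac"
    using m1 m2 unfolding ac lie_bracket_def fun_diff_def by simp
qed

lemma gen_X:
  fixes X :: "('a \<times> 'a) set" and h :: "'a \<Rightarrow> nat"
  assumes P: "finite P" and tr: "transp_on' lt" and XP: "X \<subseteq> P \<times> P"
    and Xlt: "\<And>a b. (a, b) \<in> X \<Longrightarrow> lt a b"
    and uniq: "\<And>a a' b. (a, b) \<in> X \<Longrightarrow> (a', b) \<in> X \<Longrightarrow> a = a'"
    and H2: "\<And>p q. (p, q) \<in> rel_noncov P lt \<Longrightarrow> \<exists>b. (p, b) \<in> X \<and> lt b q"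
    and hm: "\<And>a b. a \<in> P \<Longrightarrow> b \<in> P \<Longrightarrow> lt a b \<Longrightarrow> h a < h b"
  shows "breadth P lt TYPE('k::field) = card (rel_noncov P lt)"
proof -
  define x0 :: "'a \<times> 'a \<Rightarrow> 'k" where "x0 = indX X"
  have x0: "x0 \<in> gprec P lt"
    using XP Xlt by (auto simp: gprec_def x0_def indX_def split: if_splits)
  define M where "M = Max (h ` P)"
  have hM: "\<And>d. d \<in> P \<Longrightarrow> h d \<le> M" unfolding M_def using P by auto
  have main: "Eu (p, q) \<in> V.span (lie_bracket P x0 ` gprec P lt)"
    if "(p, q) \<in> rel_noncov P lt" for p q
    using that
  proof (induction "M - h q" arbitrary: p q rule: less_induct)
    case less
    have qP: "q \<in> P" using less.prems by (auto simp: rel_noncov_def)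
    obtain b where b: "(p, b) \<in> X" "lt b q" using H2[OF less.prems] by blast
    have bP: "b \<in> P" using b XP by auto
    have Eb: "(Eu (b, q) :: 'a \<times> 'a \<Rightarrow> 'k) \<in> gprec P lt"
      using bP qP b by (auto simp: gprec_def Eu_def split: if_splits)
    have br: "lie_bracket P x0 (Eu (b, q)) = Eu (p, q) - (\<Sum>d\<in>{d. (q, d) \<in> X}. Eu (b, d))"
      unfolding x0_def by (rule bracket_X[OF P XP uniq b(1) qP])
    have S: "(\<Sum>d\<in>{d. (q, d) \<in> X}. Eu (b, d)) \<in> V.span (lie_bracket P x0 ` gprec P lt)"
    proof (rule V.span_sum)
      fix d assume "d \<in> {d. (q, d) \<in> X}"
      then have qd: "(q, d) \<in> X" by simp
      have dP: "d \<in> P" using qd XP by auto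
      have lqd: "lt q d" using Xlt[OF qd] .
      have nc: "(b, d) \<in> rel_noncov P lt"
        unfolding rel_noncov_def using bP dP qP b(2) lqd tr unfolding transp_on'_def by blast
      have "M - h d < M - h q" using hm[OF qP dP lqd] hM[OF dP] by linarith
      then show "Eu (b, d) \<in> V.span (lie_bracket P x0 ` gprec P lt)"
        using less.hyps nc by blast
    qed
    have "Eu (p, q) = lie_bracket P x0 (Eu (b, q)) + (\<Sum>d\<in>{d. (q, d) \<in> X}. Eu (b, d))"
      unfolding br by simp
    also have "\<dots> \<in> V.span (lie_bracket P x0 ` gprec P lt)"
      by (rule V.span_add[OF V.span_base S]) (use Eb in blast)
    finally show ?case .
  qed
  show ?thesis
    by (rule breadth_eq[OF P tr x0]) (use main in auto)
qed

section \<open>2 x n\<close>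

definition X2 :: "nat \<Rightarrow> ((nat \<times> nat) \<times> (nat \<times> nat)) set" where
  "X2 n = {((i, j), (i', j')). (j' = j \<and> i' = i + 1 \<and> 1 \<le> i \<and> i < n \<and> (j = 1 \<or> j = 2))
      \<or> (i = 1 \<and> i' = 1 \<and> j = 1 \<and> j' = 2)}"

lemma two_by_n_breadth:
  assumes n: "n \<ge> 1"
  shows "breadth (two_by_n n) two_by_n_lt TYPE('k::field) = card (rel_noncov (two_by_n n) two_by_n_lt)"
proof (rule gen_X[where X = "X2 n" and h = "\<lambda>(i, j). i + j"])
  show "finite (two_by_n n)"
    by (rule finite_subset[of _ "{1..n} \<times> {1..2}"]) (auto simp: two_by_n_def)
  show "transp_on' two_by_n_lt"
    by (auto simp: transp_on'_def two_by_n_lt_def)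
  show "X2 n \<subseteq> two_by_n n \<times> two_by_n n"
    using n by (auto simp: X2_def two_by_n_def)
  show "two_by_n_lt a b" if "(a, b) \<in> X2 n" for a b
    using that by (auto simp: X2_def two_by_n_lt_def)
  show "a = a'" if "(a, b) \<in> X2 n" "(a', b) \<in> X2 n" for a a' b
    using that by (auto simp: X2_def)
  show "\<exists>b. (p, b) \<in> X2 n \<and> two_by_n_lt b q" if "(p, q) \<in> rel_noncov (two_by_n n) two_by_n_lt" for p q
  proof (rule exI[of _ "(fst p + 1, snd p)"])
    obtain i j where p: "p = (i, j)" by fastforce
    obtain i' j' where q: "q = (i', j')" by fastforce
    from that obtain i'' j'' where
      "1 \<le> i" "i \<le> n" "1 \<le> j" "j \<le> 2" "1 \<le> i'" "i' \<le> n" "1 \<le> j'" "j' \<le> 2"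
      "i \<le> i''" "j \<le> j''" "(i, j) \<noteq> (i'', j'')" "i'' \<le> i'" "j'' \<le> j'" "(i'', j'') \<noteq> (i', j')"
      unfolding rel_noncov_def two_by_n_def two_by_n_lt_def p q by auto
    then show "(p, fst p + 1, snd p) \<in> X2 n \<and> two_by_n_lt (fst p + 1, snd p) q"
      unfolding p q X2_def two_by_n_lt_def by auto
  qed
  show "(case a of (i, j) \<Rightarrow> i + j) < (case b of (i, j) \<Rightarrow> i + j)" if "two_by_n_lt a b" for a b
    using that by (auto simp: two_by_n_lt_def split: prod.splits)
qed

section \<open>Trees\<close>

lemma tree_lvl: "(x, y) \<in> (tree_cover m n)\<^sup>+ \<Longrightarrow> snd x < snd y"
  by (induction rule: trancl_induct) (auto simp: tree_cover_def)

lemma tree_breadth: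
  assumes m: "m \<ge> 2" and n: "n \<ge> 1"
  shows "breadth (tree_poset m n) (tree_lt m n) TYPE('k::field) = card (rel_noncov (tree_poset m n) (tree_lt m n))"
proof (rule gen_X[where X = "tree_cover m n" and h = snd])
  show "finite (tree_poset m n)"
  proof (rule finite_subset[of _ "{1..m ^ n} \<times> {1..n}"])
    show "tree_poset m n \<subseteq> {1..m ^ n} \<times> {1..n}"
    proof
      fix x assume "x \<in> tree_poset m n"
      then obtain i k where x: "x = (i, k)" "1 \<le> k" "k \<le> n" "1 \<le> i" "i \<le> m ^ (k - 1)"
        unfolding tree_poset_def by auto
      have "m ^ (k - 1) \<le> m ^ n" using m x by (intro power_increasing) auto
      then show "x \<in> {1..m ^ n} \<times> {1..n}" using x by auto
    qed
  qed simp
  show "transp_on' (tree_lt m n)"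
    unfolding transp_on'_def tree_lt_def by (meson trancl_trans)
  show "tree_cover m n \<subseteq> tree_poset m n \<times> tree_poset m n"
  proof
    fix r assume "r \<in> tree_cover m n"
    then obtain i k j where r: "r = ((i, k), (j, k + 1))" "1 \<le> k" "k < n" "1 \<le> i" "i \<le> m ^ (k - 1)"
      "m * (i - 1) + 1 \<le> j" "j \<le> m * i"
      unfolding tree_cover_def by auto
    have "m * i \<le> m * m ^ (k - 1)" using r(5) by simp
    also have "\<dots> = m ^ k" using r(2) by (cases k) auto
    finally show "r \<in> tree_poset m n \<times> tree_poset m n"
      using r by (auto simp: tree_poset_def)
  qed
  show "tree_lt m n a b" if "(a, b) \<in> tree_cover m n" for a b
    using that unfolding tree_lt_def by blast
  show "a = a'" if ab: "(a, b) \<in> tree_cover m n" "(a', b) \<in> tree_cover m n" for a a' b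
  proof -
    obtain i k j where r: "a = (i, k)" "b = (j, k + 1)" "1 \<le> i" "m * (i - 1) + 1 \<le> j" "j \<le> m * i"
      using ab(1) unfolding tree_cover_def by auto
    obtain i' k' where r': "a' = (i', k')" "b = (j, k' + 1)" "1 \<le> i'" "m * (i' - 1) + 1 \<le> j" "j \<le> m * i'"
      using ab(2) r(2) unfolding tree_cover_def by auto
    have "\<not> i < i'"
    proof
      assume "i < i'"
      then have "m * i \<le> m * (i' - 1)" by (intro mult_le_mono2) auto
      then show False using r r' by linarith
    qed
    moreover have "\<not> i' < i"
    proof
      assume "i' < i"
      then have "m * i' \<le> m * (i - 1)" by (intro mult_le_mono2) auto
      then show False using r r' by linarith
    qed
    ultimately show ?thesis using r r' by auto
  qed
  show "\<exists>b. (p, b) \<in> tree_cover m n \<and> tree_lt m n b q"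
    if pqn: "(p, q) \<in> rel_noncov (tree_poset m n) (tree_lt m n)" for p q
  proof -
    obtain z where pq: "tree_lt m n p q" "tree_lt m n p z" "tree_lt m n z q"
      using pqn unfolding rel_noncov_def by auto
    have lv: "snd p + 2 \<le> snd q"
      using tree_lvl[of p z m n] tree_lvl[of z q m n] pq unfolding tree_lt_def by fastforce
    obtain b where b: "(p, b) \<in> tree_cover m n" "(b, q) \<in> (tree_cover m n)\<^sup>*"
      using pq(1) unfolding tree_lt_def by (meson tranclD)
    have "b \<noteq> q" using b(1) lv by (auto simp: tree_cover_def)
    then have "(b, q) \<in> (tree_cover m n)\<^sup>+" using b(2) by (meson rtranclD)
    then show ?thesis using b(1) unfolding tree_lt_def by blast
  qed
  show "snd a < snd b" if "tree_lt m n a b" for a b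
    using that tree_lvl unfolding tree_lt_def by blast
qed

theorem lemma1:
  shows "(\<forall>n::nat. n \<ge> 1 \<longrightarrow>
            breadth (two_by_n n) two_by_n_lt TYPE('k::{alg_closed_field, field_char_0})
              = card (rel_noncov (two_by_n n) two_by_n_lt))
       \<and> (\<forall>m n::nat. m \<ge> 2 \<longrightarrow> n \<ge> 1 \<longrightarrow>
            breadth (tree_poset m n) (tree_lt m n) TYPE('k)
              = card (rel_noncov (tree_poset m n) (tree_lt m n)))"
  using two_by_n_breadth tree_breadth by blast

end
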